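(* Let $n\geq2$. The group $hP\Sigma_n$ is generated by the automorphisms $\chi_{ij}$ ($1\leq i\neq j\leq n$), and its abelianization $hP\Sigma_n^{ab}$ is the free abelian group with basis the classes $\overline\chi_{ij}$.
   Context: $RF_n=\langle x_1,\dots,x_n\mid [x_i,w^{-1}x_iw]=1\ (w\in F_n)\rangle$ is the reduced free group, with $[a,b]=aba^{-1}b^{-1}$. $hP\Sigma_n$ is the subgroup of $\mathrm{Aut}(RF_n)$ of automorphisms sending each $x_i$ to a conjugate of $x_i$. $\chi_{ij}$ is the automorphism of $RF_n$ sending $x_i$ to $x_j^{-1}x_ix_j$ and fixing all $x_k$, $k\neq i$. *)

theory Defs
  imports "HOL-Algebra.Algebra" "HOL-Algebra.Free_Abelian_Groups"
begin

text \<open>A letter (i, True) stands for x_i, a letter (i, False) for x_i^{-1}.\<close>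

type_synonym letter = "nat \<times> bool"
type_synonym word = "letter list"

definition letter_inv :: "letter \<Rightarrow> letter" where
  "letter_inv a = (fst a, \<not> snd a)"

definition word_inv :: "word \<Rightarrow> word" where
  "word_inv w = rev (map letter_inv w)"

definition letters :: "nat \<Rightarrow> letter set" where
  "letters n = {1..n} \<times> UNIV"

definition words :: "nat \<Rightarrow> word set" where
  "words n = {w. set w \<subseteq> letters n}"

definition comm_word :: "word \<Rightarrow> word \<Rightarrow> word" where
  "comm_word a b = a @ b @ word_inv a @ word_inv b"

definition relator :: "nat \<Rightarrow> word \<Rightarrow> word" where
  "relator i w = comm_word [(i, True)] (word_inv w @ [(i, True)] @ w)"

inductive rf_eq :: "nat \<Rightarrow> word \<Rightarrow> word \<Rightarrow> bool" for n where
  rf_refl: "w \<in> words n \<Longrightarrow> rf_eq n w w"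
| rf_sym: "rf_eq n u v \<Longrightarrow> rf_eq n v u"
| rf_trans: "rf_eq n u v \<Longrightarrow> rf_eq n v w \<Longrightarrow> rf_eq n u w"
| rf_cancel: "u \<in> words n \<Longrightarrow> v \<in> words n \<Longrightarrow> a \<in> letters n \<Longrightarrow>
     rf_eq n (u @ [a, letter_inv a] @ v) (u @ v)"
| rf_rel: "u \<in> words n \<Longrightarrow> v \<in> words n \<Longrightarrow> i \<in> {1..n} \<Longrightarrow> w \<in> words n \<Longrightarrow>
     rf_eq n (u @ relator i w @ v) (u @ v)"

definition rf_class :: "nat \<Rightarrow> word \<Rightarrow> word set" where
  "rf_class n w = {v. rf_eq n w v}"

definition RF :: "nat \<Rightarrow> word set monoid" where
  "RF n = \<lparr> carrier = rf_class n ` words n,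
            monoid.mult = (\<lambda>A B. {v. \<exists>a\<in>A. \<exists>b\<in>B. rf_eq n (a @ b) v}),
            one = rf_class n [] \<rparr>"

definition gen :: "nat \<Rightarrow> nat \<Rightarrow> word set" where
  "gen n i = rf_class n [(i, True)]"

definition hPSigma :: "nat \<Rightarrow> (word set \<Rightarrow> word set) monoid" where
  "hPSigma n = (AutoGroup (RF n)) \<lparr> carrier :=
     {\<phi> \<in> auto (RF n). \<forall>i\<in>{1..n}. \<exists>g\<in>carrier (RF n).
         \<phi> (gen n i) = g \<otimes>\<^bsub>RF n\<^esub> gen n i \<otimes>\<^bsub>RF n\<^esub> inv\<^bsub>RF n\<^esub> g} \<rparr>"

definition chi :: "nat \<Rightarrow> nat \<Rightarrow> nat \<Rightarrow> (word set \<Rightarrow> word set)" where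
  "chi n i j = (THE \<phi>. \<phi> \<in> auto (RF n) \<and>
     (\<forall>k\<in>{1..n}. \<phi> (gen n k) =
        (if k = i then inv\<^bsub>RF n\<^esub> (gen n j) \<otimes>\<^bsub>RF n\<^esub> gen n i \<otimes>\<^bsub>RF n\<^esub> gen n j
         else gen n k)))"

definition chi_index :: "nat \<Rightarrow> (nat \<times> nat) set" where
  "chi_index n = {(i, j). i \<in> {1..n} \<and> j \<in> {1..n} \<and> i \<noteq> j}"

definition abelianization :: "('a, 'b) monoid_scheme \<Rightarrow> 'a set monoid" where
  "abelianization G = G Mod (derived G (carrier G))"

end

theory Submission
  imports Defs
begin

lemma letter_inv_inv[simp]: "letter_inv (letter_inv a) = a"
  by (simp add: letter_inv_def)

lemma word_inv_inv[simp]: "word_inv (word_inv w) = w"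
  by (simp add: word_inv_def rev_map comp_def)

lemma word_inv_append[simp]: "word_inv (u @ v) = word_inv v @ word_inv u"
  by (simp add: word_inv_def)

lemma word_inv_Nil[simp]: "word_inv [] = []" and word_inv_Cons[simp]: "word_inv (a # w) = word_inv w @ [letter_inv a]"
  by (simp_all add: word_inv_def)

lemma letters_inv[simp]: "letter_inv a \<in> letters n \<longleftrightarrow> a \<in> letters n"
  by (cases a) (auto simp add: letter_inv_def letters_def)

lemma words_append[simp]: "u @ v \<in> words n \<longleftrightarrow> u \<in> words n \<and> v \<in> words n"
  by (auto simp: words_def)

lemma words_Cons[simp]: "a # v \<in> words n \<longleftrightarrow> a \<in> letters n \<and> v \<in> words n"
  by (auto simp: words_def)

lemma words_Nil[simp]: "[] \<in> words n"
  by (auto simp: words_def)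

lemma words_inv[simp]: "word_inv w \<in> words n \<longleftrightarrow> w \<in> words n"
  by (induct w) auto

lemma letters_iff[simp]: "(i, b) \<in> letters n \<longleftrightarrow> i \<in> {1..n}"
  by (simp add: letters_def)

lemma relator_words: "i \<in> {1..n} \<Longrightarrow> w \<in> words n \<Longrightarrow> relator i w \<in> words n"
  by (simp add: relator_def comm_word_def)

lemma rf_eq_words: "rf_eq n u v \<Longrightarrow> u \<in> words n \<and> v \<in> words n"
  by (induct rule: rf_eq.induct) (auto simp: relator_words)

lemma rf_eq_append_right: "rf_eq n u v \<Longrightarrow> w \<in> words n \<Longrightarrow> rf_eq n (u @ w) (v @ w)"
proof (induct rule: rf_eq.induct)
  case (rf_refl w) then show ?case by (simp add: rf_eq.rf_refl)
next
  case (rf_sym u v) then show ?case by (blast intro: rf_eq.rf_sym)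
next
  case (rf_trans u v w) then show ?case by (blast intro: rf_eq.rf_trans)
next
  case (rf_cancel u v a) then show ?case using rf_eq.rf_cancel[of u n "v @ w" a] by simp
next
  case (rf_rel u v i x) then show ?case using rf_eq.rf_rel[of u n "v @ w" i x] by simp
qed

lemma rf_eq_append_left: "rf_eq n u v \<Longrightarrow> w \<in> words n \<Longrightarrow> rf_eq n (w @ u) (w @ v)"
proof (induct rule: rf_eq.induct)
  case (rf_refl x) then show ?case by (simp add: rf_eq.rf_refl)
next
  case (rf_sym u v) then show ?case by (blast intro: rf_eq.rf_sym)
next
  case (rf_trans u v w) then show ?case by (blast intro: rf_eq.rf_trans)
next
  case (rf_cancel u v a) then show ?case using rf_eq.rf_cancel[of "w @ u" n v a] by simp
next
  case (rf_rel u v i x) then show ?case using rf_eq.rf_rel[of "w @ u" n v i x] by simp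
qed

lemma rf_eq_append: "rf_eq n u u' \<Longrightarrow> rf_eq n v v' \<Longrightarrow> rf_eq n (u @ v) (u' @ v')"
  by (meson rf_eq.rf_trans rf_eq_append_left rf_eq_append_right rf_eq_words)

lemma rf_class_eq: "u \<in> words n \<Longrightarrow> v \<in> words n \<Longrightarrow> rf_class n u = rf_class n v \<longleftrightarrow> rf_eq n u v"
  unfolding rf_class_def
  by (auto intro: rf_eq.rf_refl rf_eq.rf_sym rf_eq.rf_trans)

lemma rf_class_mem: "u \<in> words n \<Longrightarrow> u \<in> rf_class n u"
  by (simp add: rf_class_def rf_refl)

lemma rf_class_mem_iff: "u \<in> words n \<Longrightarrow> v \<in> rf_class n u \<longleftrightarrow> v \<in> words n \<and> rf_class n u = rf_class n v"
  using rf_class_eq rf_eq_words unfolding rf_class_def by blast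

lemma RF_carrier: "carrier (RF n) = rf_class n ` words n"
  by (simp add: RF_def)

lemma RF_one: "\<one>\<^bsub>RF n\<^esub> = rf_class n []"
  by (simp add: RF_def)

lemma RF_mult: "u \<in> words n \<Longrightarrow> v \<in> words n \<Longrightarrow>
   rf_class n u \<otimes>\<^bsub>RF n\<^esub> rf_class n v = rf_class n (u @ v)"
proof -
  assume uv: "u \<in> words n" "v \<in> words n"
  have "{x. \<exists>a\<in>rf_class n u. \<exists>b\<in>rf_class n v. rf_eq n (a @ b) x} = rf_class n (u @ v)"
  proof (safe)
    fix x a b assume "a \<in> rf_class n u" "b \<in> rf_class n v" "rf_eq n (a @ b) x"
    then show "x \<in> rf_class n (u @ v)" unfolding rf_class_def
      by (auto intro: rf_eq.rf_trans rf_eq_append)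
  next
    fix x assume "x \<in> rf_class n (u @ v)"
    then show "\<exists>a\<in>rf_class n u. \<exists>b\<in>rf_class n v. rf_eq n (a @ b) x"
      using uv rf_class_mem unfolding rf_class_def by blast
  qed
  then show ?thesis by (simp add: RF_def)
qed

lemma cancel_inv: "w \<in> words n \<Longrightarrow> rf_eq n (w @ word_inv w) []"
proof (induct w)
  case Nil then show ?case by (simp add: rf_refl)
next
  case (Cons a w)
  have "rf_eq n ([a] @ (w @ word_inv w) @ [letter_inv a]) ([a] @ [] @ [letter_inv a])"
    using Cons by (intro rf_eq_append rf_refl) auto
  moreover have "rf_eq n ([] @ [a, letter_inv a] @ []) ([] @ [])"
    using Cons by (intro rf_cancel) auto
  ultimately show ?case by (auto intro: rf_trans)
qed

lemma cancel_inv': "w \<in> words n \<Longrightarrow> rf_eq n (word_inv w @ w) []"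
  using cancel_inv[of "word_inv w" n] by simp

lemma RF_group: "group (RF n)"
proof (rule groupI)
  fix x y assume "x \<in> carrier (RF n)" "y \<in> carrier (RF n)"
  then show "x \<otimes>\<^bsub>RF n\<^esub> y \<in> carrier (RF n)"
    by (auto simp: RF_carrier RF_mult)
next
  show "\<one>\<^bsub>RF n\<^esub> \<in> carrier (RF n)" by (auto simp: RF_carrier RF_one)
next
  fix x y z assume "x \<in> carrier (RF n)" "y \<in> carrier (RF n)" "z \<in> carrier (RF n)"
  then show "x \<otimes>\<^bsub>RF n\<^esub> y \<otimes>\<^bsub>RF n\<^esub> z = x \<otimes>\<^bsub>RF n\<^esub> (y \<otimes>\<^bsub>RF n\<^esub> z)"
    by (auto simp: RF_carrier RF_mult)
next
  fix x assume "x \<in> carrier (RF n)"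
  then show "\<one>\<^bsub>RF n\<^esub> \<otimes>\<^bsub>RF n\<^esub> x = x"
    by (auto simp: RF_carrier RF_mult RF_one)
next
  fix x assume "x \<in> carrier (RF n)"
  then obtain w where w: "w \<in> words n" "x = rf_class n w" by (auto simp: RF_carrier)
  then show "\<exists>y\<in>carrier (RF n). y \<otimes>\<^bsub>RF n\<^esub> x = \<one>\<^bsub>RF n\<^esub>"
    by (intro bexI[of _ "rf_class n (word_inv w)"])
       (auto simp: RF_carrier RF_mult RF_one rf_class_eq cancel_inv')
qed

interpretation RFg: group "RF n" for n by (rule RF_group)

lemma RF_inv: "w \<in> words n \<Longrightarrow> inv\<^bsub>RF n\<^esub> (rf_class n w) = rf_class n (word_inv w)"
  by (rule RFg.inv_equality) (auto simp: RF_carrier RF_mult RF_one rf_class_eq cancel_inv')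

lemma rf_class_carrier[simp]: "w \<in> words n \<Longrightarrow> rf_class n w \<in> carrier (RF n)"
  by (simp add: RF_carrier)

lemma gen_carrier[simp]: "i \<in> {1..n} \<Longrightarrow> gen n i \<in> carrier (RF n)"
  by (simp add: gen_def)


definition letter_img :: "(nat \<Rightarrow> word) \<Rightarrow> letter \<Rightarrow> word" where
  "letter_img f a = (if snd a then f (fst a) else word_inv (f (fst a)))"

definition subst :: "(nat \<Rightarrow> word) \<Rightarrow> word \<Rightarrow> word" where
  "subst f w = concat (map (letter_img f) w)"

lemma subst_Nil[simp]: "subst f [] = []"
  and subst_Cons[simp]: "subst f (a # w) = letter_img f a @ subst f w"
  and subst_append[simp]: "subst f (u @ v) = subst f u @ subst f v"
  by (simp_all add: subst_def)

lemma letter_img_inv[simp]: "letter_img f (letter_inv a) = word_inv (letter_img f a)"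
  by (simp add: letter_img_def letter_inv_def)

lemma subst_inv[simp]: "subst f (word_inv w) = word_inv (subst f w)"
  by (induct w) auto

definition good :: "nat \<Rightarrow> (nat \<Rightarrow> word) \<Rightarrow> bool" where
  "good n f \<longleftrightarrow> (\<forall>k\<in>{1..n}. f k \<in> words n \<and>
      (\<exists>g\<in>words n. rf_eq n (f k) (g @ [(k, True)] @ word_inv g)))"

lemma good_letter_words: "good n f \<Longrightarrow> a \<in> letters n \<Longrightarrow> letter_img f a \<in> words n"
  by (cases a) (auto simp: good_def letter_img_def letters_def)

lemma good_subst_words: "good n f \<Longrightarrow> w \<in> words n \<Longrightarrow> subst f w \<in> words n"
  by (induct w) (auto simp: good_letter_words)

lemma rf_class_append: "u \<in> words n \<Longrightarrow> v \<in> words n \<Longrightarrow>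
   rf_class n (u @ v) = rf_class n u \<otimes>\<^bsub>RF n\<^esub> rf_class n v"
  by (simp add: RF_mult)

lemma (in group) gcancel1: "x \<in> carrier G \<Longrightarrow> y \<in> carrier G \<Longrightarrow> x \<otimes> (inv x \<otimes> y) = y"
  by (simp flip: m_assoc)
lemma (in group) gcancel2: "x \<in> carrier G \<Longrightarrow> y \<in> carrier G \<Longrightarrow> inv x \<otimes> (x \<otimes> y) = y"
  by (simp flip: m_assoc)

lemmas (in group) gsimps = m_assoc inv_mult_group gcancel1 gcancel2

lemma (in group) commutator_one:
  assumes "x \<in> carrier G" "y \<in> carrier G" "x \<otimes> y = y \<otimes> x"
  shows "x \<otimes> y \<otimes> inv x \<otimes> inv y = \<one>"
  using assms by (simp add: m_assoc flip: m_assoc[of y "inv x" "inv y"] inv_mult_group)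

lemma (in group) comm_of_commutator:
  assumes "x \<in> carrier G" "y \<in> carrier G" "x \<otimes> y \<otimes> inv x \<otimes> inv y = \<one>"
  shows "x \<otimes> y = y \<otimes> x"
proof -
  have "x \<otimes> y = (x \<otimes> y \<otimes> inv x \<otimes> inv y) \<otimes> (y \<otimes> x)" using assms(1,2) by (simp add: m_assoc flip: m_assoc[of "inv y" y x])
  also have "\<dots> = y \<otimes> x" using assms by simp
  finally show ?thesis .
qed

lemma gen_commutes:
  assumes i: "i \<in> {1..n}" and y: "y \<in> carrier (RF n)"
  shows "gen n i \<otimes>\<^bsub>RF n\<^esub> (inv\<^bsub>RF n\<^esub> y \<otimes>\<^bsub>RF n\<^esub> gen n i \<otimes>\<^bsub>RF n\<^esub> y)
       = (inv\<^bsub>RF n\<^esub> y \<otimes>\<^bsub>RF n\<^esub> gen n i \<otimes>\<^bsub>RF n\<^esub> y) \<otimes>\<^bsub>RF n\<^esub> gen n i"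
proof -
  obtain w where w: "w \<in> words n" "y = rf_class n w" using y by (auto simp: RF_carrier)
  have "rf_eq n ([] @ relator i w @ []) ([] @ [])" using i w by (intro rf_rel) auto
  then have "rf_class n (relator i w) = \<one>\<^bsub>RF n\<^esub>"
    using i w by (simp add: RF_one rf_class_eq relator_words)
  moreover have "rf_class n (relator i w) = gen n i \<otimes>\<^bsub>RF n\<^esub> (inv\<^bsub>RF n\<^esub> y \<otimes>\<^bsub>RF n\<^esub> gen n i \<otimes>\<^bsub>RF n\<^esub> y)
     \<otimes>\<^bsub>RF n\<^esub> inv\<^bsub>RF n\<^esub> gen n i \<otimes>\<^bsub>RF n\<^esub> inv\<^bsub>RF n\<^esub> (inv\<^bsub>RF n\<^esub> y \<otimes>\<^bsub>RF n\<^esub> gen n i \<otimes>\<^bsub>RF n\<^esub> y)"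
    using i w by (simp add: relator_def comm_word_def gen_def RF_mult RF_inv del: word_inv_append word_inv_Cons)
  ultimately show ?thesis
    using i y by (intro RFg.comm_of_commutator) auto
qed

lemma conj_commutes:
  assumes i: "i \<in> {1..n}" and g: "g \<in> carrier (RF n)" and z: "z \<in> carrier (RF n)"
  and c: "c = g \<otimes>\<^bsub>RF n\<^esub> gen n i \<otimes>\<^bsub>RF n\<^esub> inv\<^bsub>RF n\<^esub> g"
  shows "c \<otimes>\<^bsub>RF n\<^esub> (inv\<^bsub>RF n\<^esub> z \<otimes>\<^bsub>RF n\<^esub> c \<otimes>\<^bsub>RF n\<^esub> z)
       = (inv\<^bsub>RF n\<^esub> z \<otimes>\<^bsub>RF n\<^esub> c \<otimes>\<^bsub>RF n\<^esub> z) \<otimes>\<^bsub>RF n\<^esub> c"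
proof -
  define y where "y = inv\<^bsub>RF n\<^esub> g \<otimes>\<^bsub>RF n\<^esub> z \<otimes>\<^bsub>RF n\<^esub> g"
  have y: "y \<in> carrier (RF n)" using g z by (simp add: y_def)
  define Y where "Y = inv\<^bsub>RF n\<^esub> y \<otimes>\<^bsub>RF n\<^esub> gen n i \<otimes>\<^bsub>RF n\<^esub> y"
  have Y: "Y \<in> carrier (RF n)" using y i by (simp add: Y_def)
  have comm: "gen n i \<otimes>\<^bsub>RF n\<^esub> Y = Y \<otimes>\<^bsub>RF n\<^esub> gen n i"
    unfolding Y_def by (rule gen_commutes[OF i y])
  have "c \<otimes>\<^bsub>RF n\<^esub> (inv\<^bsub>RF n\<^esub> z \<otimes>\<^bsub>RF n\<^esub> c \<otimes>\<^bsub>RF n\<^esub> z)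
     = g \<otimes>\<^bsub>RF n\<^esub> (gen n i \<otimes>\<^bsub>RF n\<^esub> Y) \<otimes>\<^bsub>RF n\<^esub> inv\<^bsub>RF n\<^esub> g"
    using i g z by (simp add: c Y_def y_def RFg.gsimps)
  also have "\<dots> = g \<otimes>\<^bsub>RF n\<^esub> (Y \<otimes>\<^bsub>RF n\<^esub> gen n i) \<otimes>\<^bsub>RF n\<^esub> inv\<^bsub>RF n\<^esub> g"
    using comm by simp
  also have "\<dots> = (inv\<^bsub>RF n\<^esub> z \<otimes>\<^bsub>RF n\<^esub> c \<otimes>\<^bsub>RF n\<^esub> z) \<otimes>\<^bsub>RF n\<^esub> c"
    using i g z by (simp add: c Y_def y_def RFg.gsimps)
  finally show ?thesis .
qed

lemma rf_class_comm_word: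
  "a \<in> words n \<Longrightarrow> b \<in> words n \<Longrightarrow> rf_class n (comm_word a b) =
    rf_class n a \<otimes>\<^bsub>RF n\<^esub> rf_class n b \<otimes>\<^bsub>RF n\<^esub> inv\<^bsub>RF n\<^esub> rf_class n a \<otimes>\<^bsub>RF n\<^esub> inv\<^bsub>RF n\<^esub> rf_class n b"
  by (simp add: comm_word_def RF_mult RF_inv RFg.m_assoc del: word_inv_append)

lemma good_relator:
  assumes f: "good n f" and i: "i \<in> {1..n}" and w: "w \<in> words n"
  shows "rf_eq n (subst f (relator i w)) []"
proof -
  obtain g where g: "g \<in> words n" "rf_eq n (f i) (g @ [(i, True)] @ word_inv g)" and fi: "f i \<in> words n"
    using f i unfolding good_def by blast
  define W where "W = subst f w"
  have W: "W \<in> words n" using f w by (simp add: W_def good_subst_words)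
  have eq: "subst f (relator i w) = comm_word (f i) (word_inv W @ f i @ W)"
    by (simp add: relator_def comm_word_def W_def letter_img_def letter_inv_def del: word_inv_append)
  define c where "c = rf_class n (f i)"
  have c: "c = rf_class n g \<otimes>\<^bsub>RF n\<^esub> gen n i \<otimes>\<^bsub>RF n\<^esub> inv\<^bsub>RF n\<^esub> rf_class n g"
    using g fi i by (simp add: c_def rf_class_eq RF_mult RF_inv gen_def)
  have "rf_class n (comm_word (f i) (word_inv W @ f i @ W))
     = c \<otimes>\<^bsub>RF n\<^esub> (inv\<^bsub>RF n\<^esub> rf_class n W \<otimes>\<^bsub>RF n\<^esub> c \<otimes>\<^bsub>RF n\<^esub> rf_class n W) \<otimes>\<^bsub>RF n\<^esub> inv\<^bsub>RF n\<^esub> c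
       \<otimes>\<^bsub>RF n\<^esub> inv\<^bsub>RF n\<^esub> (inv\<^bsub>RF n\<^esub> rf_class n W \<otimes>\<^bsub>RF n\<^esub> c \<otimes>\<^bsub>RF n\<^esub> rf_class n W)"
    using W fi by (simp add: rf_class_comm_word c_def RF_mult RF_inv RFg.m_assoc del: word_inv_append)
  also have "\<dots> = \<one>\<^bsub>RF n\<^esub>"
  proof -
    have cc: "c \<in> carrier (RF n)" using fi by (simp add: c_def)
    have com: "c \<otimes>\<^bsub>RF n\<^esub> (inv\<^bsub>RF n\<^esub> rf_class n W \<otimes>\<^bsub>RF n\<^esub> c \<otimes>\<^bsub>RF n\<^esub> rf_class n W)
       = (inv\<^bsub>RF n\<^esub> rf_class n W \<otimes>\<^bsub>RF n\<^esub> c \<otimes>\<^bsub>RF n\<^esub> rf_class n W) \<otimes>\<^bsub>RF n\<^esub> c"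
      using W g i by (intro conj_commutes[OF i _ _ c]) auto
    show ?thesis using cc W by (intro RFg.commutator_one com) auto
  qed
  finally show ?thesis
    using eq W fi by (simp add: RF_one rf_class_eq comm_word_def)
qed

lemma letter_cancel_words: "good n f \<Longrightarrow> a \<in> letters n \<Longrightarrow> rf_eq n (letter_img f a @ letter_img f (letter_inv a)) []"
  by (simp add: cancel_inv good_letter_words)

lemma subst_rf_eq: "rf_eq n u v \<Longrightarrow> good n f \<Longrightarrow> rf_eq n (subst f u) (subst f v)"
proof (induct rule: rf_eq.induct)
  case (rf_refl w) then show ?case by (simp add: rf_eq.rf_refl good_subst_words)
next
  case (rf_sym u v) then show ?case by (blast intro: rf_eq.rf_sym)
next
  case (rf_trans u v w) then show ?case by (blast intro: rf_eq.rf_trans)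
next
  case (rf_cancel u v a)
  have "rf_eq n (subst f u @ (letter_img f a @ letter_img f (letter_inv a)) @ subst f v) (subst f u @ [] @ subst f v)"
    using rf_cancel letter_cancel_words[of n f a]
    by (intro rf_eq_append rf_eq.rf_refl good_subst_words) auto
  then show ?case by simp
next
  case (rf_rel u v i w)
  have "rf_eq n (subst f u @ subst f (relator i w) @ subst f v) (subst f u @ [] @ subst f v)"
    using rf_rel good_relator[of n f i w]
    by (intro rf_eq_append rf_eq.rf_refl good_subst_words) auto
  then show ?case by simp
qed

definition ind :: "nat \<Rightarrow> (nat \<Rightarrow> word) \<Rightarrow> word set \<Rightarrow> word set" where
  "ind n f = (\<lambda>A\<in>carrier (RF n). rf_class n (subst f (SOME w. w \<in> A)))"

lemma ind_class: "good n f \<Longrightarrow> w \<in> words n \<Longrightarrow> ind n f (rf_class n w) = rf_class n (subst f w)"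
proof -
  assume f: "good n f" and w: "w \<in> words n"
  define v where "v = (SOME v. v \<in> rf_class n w)"
  have "v \<in> rf_class n w" unfolding v_def using rf_class_mem[OF w] by (rule someI)
  then have "rf_eq n w v" by (simp add: rf_class_def)
  then have "rf_eq n (subst f w) (subst f v)" using f by (rule subst_rf_eq)
  then have "rf_class n (subst f v) = rf_class n (subst f w)"
    using rf_eq_words[OF \<open>rf_eq n (subst f w) (subst f v)\<close>] rf_class_eq by (metis rf_eq.rf_sym)
  then show ?thesis using w by (simp add: ind_def v_def)
qed

lemma ind_hom: "good n f \<Longrightarrow> ind n f \<in> hom (RF n) (RF n)"
  by (rule homI) (auto simp: RF_carrier ind_class RF_mult good_subst_words)

lemma ind_gen: "good n f \<Longrightarrow> k \<in> {1..n} \<Longrightarrow> ind n f (gen n k) = rf_class n (f k)"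
  by (simp add: gen_def ind_class letter_img_def)

lemma ind_ext: "ind n f \<in> extensional (carrier (RF n))"
  by (simp add: ind_def)

lemma class_single_False: "k \<in> {1..n} \<Longrightarrow> rf_class n [(k, False)] = inv\<^bsub>RF n\<^esub> gen n k"
  by (simp add: gen_def RF_inv letter_inv_def)

lemma hom_eq_on_gens:
  assumes G: "group G" and h1: "h1 \<in> hom (RF n) G" and h2: "h2 \<in> hom (RF n) G"
    and eq: "\<And>k. k \<in> {1..n} \<Longrightarrow> h1 (gen n k) = h2 (gen n k)"
    and A: "A \<in> carrier (RF n)"
  shows "h1 A = h2 A"
proof -
  interpret g1: group_hom "RF n" G h1 using G h1 by (simp add: group_hom_def group_hom_axioms_def RF_group)
  interpret g2: group_hom "RF n" G h2 using G h2 by (simp add: group_hom_def group_hom_axioms_def RF_group)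
  have "w \<in> words n \<Longrightarrow> h1 (rf_class n w) = h2 (rf_class n w)" for w
  proof (induct w)
    case Nil then show ?case by (simp flip: RF_one)
  next
    case (Cons a w)
    obtain k b where a: "a = (k, b)" by (cases a)
    have k: "k \<in> {1..n}" using Cons a by auto
    have "rf_class n (a # w) = rf_class n [a] \<otimes>\<^bsub>RF n\<^esub> rf_class n w"
      using Cons by (simp add: RF_mult)
    moreover have "h1 (rf_class n [a]) = h2 (rf_class n [a])"
      using k eq[OF k] by (cases b) (simp_all add: a class_single_False, simp add: gen_def)
    ultimately show ?case using Cons k a by simp
  qed
  then show ?thesis using A by (auto simp: RF_carrier)
qed

lemma auto_eq_on_gens:
  assumes h1: "h1 \<in> auto (RF n)" and h2: "h2 \<in> auto (RF n)"
    and eq: "\<And>k. k \<in> {1..n} \<Longrightarrow> h1 (gen n k) = h2 (gen n k)"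
  shows "h1 = h2"
proof (rule extensionalityI)
  show "h1 \<in> extensional (carrier (RF n))" "h2 \<in> extensional (carrier (RF n))"
    using h1 h2 by (auto simp: auto_def Bij_def)
  show "h1 x = h2 x" if "x \<in> carrier (RF n)" for x
    by (rule hom_eq_on_gens[OF RF_group]) (use h1 h2 eq that in \<open>auto simp: auto_def\<close>)
qed


definition HP :: "nat \<Rightarrow> (word set \<Rightarrow> word set) set" where
  "HP n = {\<phi> \<in> auto (RF n). \<forall>i\<in>{1..n}. \<exists>g\<in>carrier (RF n).
         \<phi> (gen n i) = g \<otimes>\<^bsub>RF n\<^esub> gen n i \<otimes>\<^bsub>RF n\<^esub> inv\<^bsub>RF n\<^esub> g}"

lemma hP_eq: "hPSigma n = (AutoGroup (RF n))\<lparr>carrier := HP n\<rparr>"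
  by (simp add: hPSigma_def HP_def)

lemma AG_carrier: "carrier (AutoGroup (RF n)) = auto (RF n)"
  by (simp add: AutoGroup_def)

lemma AG_mult: "\<phi> \<in> auto (RF n) \<Longrightarrow> \<psi> \<in> auto (RF n) \<Longrightarrow>
   \<phi> \<otimes>\<^bsub>AutoGroup (RF n)\<^esub> \<psi> = compose (carrier (RF n)) \<phi> \<psi>"
  by (simp add: AutoGroup_def BijGroup_def auto_def)

lemma AG_one: "\<one>\<^bsub>AutoGroup (RF n)\<^esub> = (\<lambda>x\<in>carrier (RF n). x)"
  by (simp add: AutoGroup_def BijGroup_def)

interpretation AGg: group "AutoGroup (RF n)" for n by (rule RFg.AutoGroup)

lemma auto_hom: "\<phi> \<in> auto (RF n) \<Longrightarrow> group_hom (RF n) (RF n) \<phi>"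
  by (simp add: auto_def group_hom_def group_hom_axioms_def RF_group)

lemma auto_closed: "\<phi> \<in> auto (RF n) \<Longrightarrow> x \<in> carrier (RF n) \<Longrightarrow> \<phi> x \<in> carrier (RF n)"
  by (auto simp: auto_def hom_def)

lemma AG_inv_left: "\<phi> \<in> auto (RF n) \<Longrightarrow> x \<in> carrier (RF n) \<Longrightarrow>
   (inv\<^bsub>AutoGroup (RF n)\<^esub> \<phi>) (\<phi> x) = x"
proof -
  assume p: "\<phi> \<in> auto (RF n)" and x: "x \<in> carrier (RF n)"
  have ip: "inv\<^bsub>AutoGroup (RF n)\<^esub> \<phi> \<in> auto (RF n)" using p AGg.inv_closed by (simp add: AG_carrier)
  have "inv\<^bsub>AutoGroup (RF n)\<^esub> \<phi> \<otimes>\<^bsub>AutoGroup (RF n)\<^esub> \<phi> = \<one>\<^bsub>AutoGroup (RF n)\<^esub>"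
    using p by (simp add: AG_carrier)
  then have "compose (carrier (RF n)) (inv\<^bsub>AutoGroup (RF n)\<^esub> \<phi>) \<phi> x = x"
    using p ip x by (simp add: AG_mult AG_one)
  then show ?thesis using x by (simp add: compose_def)
qed

lemma AG_inv_right: "\<phi> \<in> auto (RF n) \<Longrightarrow> x \<in> carrier (RF n) \<Longrightarrow>
   \<phi> ((inv\<^bsub>AutoGroup (RF n)\<^esub> \<phi>) x) = x"
proof -
  assume p: "\<phi> \<in> auto (RF n)" and x: "x \<in> carrier (RF n)"
  have ip: "inv\<^bsub>AutoGroup (RF n)\<^esub> \<phi> \<in> auto (RF n)" using p AGg.inv_closed by (simp add: AG_carrier)
  have "\<phi> \<otimes>\<^bsub>AutoGroup (RF n)\<^esub> inv\<^bsub>AutoGroup (RF n)\<^esub> \<phi> = \<one>\<^bsub>AutoGroup (RF n)\<^esub>"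
    using p by (simp add: AG_carrier)
  then have "compose (carrier (RF n)) \<phi> (inv\<^bsub>AutoGroup (RF n)\<^esub> \<phi>) x = x"
    using p ip x by (simp add: AG_mult AG_one)
  then show ?thesis using x by (simp add: compose_def)
qed

lemma HP_subgroup: "subgroup (HP n) (AutoGroup (RF n))"
proof (rule AGg.subgroupI)
  show "HP n \<subseteq> carrier (AutoGroup (RF n))" by (auto simp: HP_def AG_carrier)
  show "HP n \<noteq> {}"
  proof -
    have "(\<lambda>x\<in>carrier (RF n). x) \<in> HP n"
      using RFg.id_in_auto by (auto simp: HP_def intro!: bexI[of _ "\<one>\<^bsub>RF n\<^esub>"])
    then show ?thesis by blast
  qed
next
  fix \<phi> \<psi> assume p: "\<phi> \<in> HP n" and q: "\<psi> \<in> HP n"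
  have pa: "\<phi> \<in> auto (RF n)" and qa: "\<psi> \<in> auto (RF n)" using p q by (auto simp: HP_def)
  interpret P: group_hom "RF n" "RF n" \<phi> using pa by (rule auto_hom)
  show "\<phi> \<otimes>\<^bsub>AutoGroup (RF n)\<^esub> \<psi> \<in> HP n"
    unfolding HP_def
  proof (intro CollectI conjI ballI)
    show "\<phi> \<otimes>\<^bsub>AutoGroup (RF n)\<^esub> \<psi> \<in> auto (RF n)" using pa qa AGg.m_closed by (simp add: AG_carrier)
    fix i assume i: "i \<in> {1..n}"
    obtain g where g: "g \<in> carrier (RF n)" "\<psi> (gen n i) = g \<otimes>\<^bsub>RF n\<^esub> gen n i \<otimes>\<^bsub>RF n\<^esub> inv\<^bsub>RF n\<^esub> g"
      using q i unfolding HP_def by blast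
    obtain h where h: "h \<in> carrier (RF n)" "\<phi> (gen n i) = h \<otimes>\<^bsub>RF n\<^esub> gen n i \<otimes>\<^bsub>RF n\<^esub> inv\<^bsub>RF n\<^esub> h"
      using p i unfolding HP_def by blast
    have "(\<phi> \<otimes>\<^bsub>AutoGroup (RF n)\<^esub> \<psi>) (gen n i) = \<phi> (\<psi> (gen n i))"
      using pa qa i by (simp add: AG_mult compose_def)
    also have "\<dots> = (\<phi> g \<otimes>\<^bsub>RF n\<^esub> h) \<otimes>\<^bsub>RF n\<^esub> gen n i \<otimes>\<^bsub>RF n\<^esub> inv\<^bsub>RF n\<^esub> (\<phi> g \<otimes>\<^bsub>RF n\<^esub> h)"
      using g h i by (simp add: RFg.gsimps)
    finally show "\<exists>g\<in>carrier (RF n). (\<phi> \<otimes>\<^bsub>AutoGroup (RF n)\<^esub> \<psi>) (gen n i) = g \<otimes>\<^bsub>RF n\<^esub> gen n i \<otimes>\<^bsub>RF n\<^esub> inv\<^bsub>RF n\<^esub> g"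
      using g h by auto
  qed
next
  fix \<phi> assume p: "\<phi> \<in> HP n"
  have pa: "\<phi> \<in> auto (RF n)" using p by (auto simp: HP_def)
  define \<psi> where "\<psi> = inv\<^bsub>AutoGroup (RF n)\<^esub> \<phi>"
  have qa: "\<psi> \<in> auto (RF n)" using pa AGg.inv_closed by (simp add: AG_carrier \<psi>_def)
  interpret Q: group_hom "RF n" "RF n" \<psi> using qa by (rule auto_hom)
  show "inv\<^bsub>AutoGroup (RF n)\<^esub> \<phi> \<in> HP n"
    unfolding HP_def \<psi>_def[symmetric]
  proof (intro CollectI conjI ballI)
    show "\<psi> \<in> auto (RF n)" by (rule qa)
    fix i assume i: "i \<in> {1..n}"
    obtain g where g: "g \<in> carrier (RF n)" "\<phi> (gen n i) = g \<otimes>\<^bsub>RF n\<^esub> gen n i \<otimes>\<^bsub>RF n\<^esub> inv\<^bsub>RF n\<^esub> g"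
      using p i unfolding HP_def by blast
    have "gen n i = \<psi> (\<phi> (gen n i))" using AG_inv_left[OF pa, of "gen n i"] i by (simp add: \<psi>_def)
    also have "\<dots> = \<psi> g \<otimes>\<^bsub>RF n\<^esub> \<psi> (gen n i) \<otimes>\<^bsub>RF n\<^esub> inv\<^bsub>RF n\<^esub> \<psi> g"
      using g i by simp
    finally have e: "gen n i = \<psi> g \<otimes>\<^bsub>RF n\<^esub> \<psi> (gen n i) \<otimes>\<^bsub>RF n\<^esub> inv\<^bsub>RF n\<^esub> \<psi> g" .
    have "\<psi> (gen n i) = inv\<^bsub>RF n\<^esub> \<psi> g \<otimes>\<^bsub>RF n\<^esub> (\<psi> g \<otimes>\<^bsub>RF n\<^esub> \<psi> (gen n i) \<otimes>\<^bsub>RF n\<^esub> inv\<^bsub>RF n\<^esub> \<psi> g) \<otimes>\<^bsub>RF n\<^esub> \<psi> g"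
      using g i by (simp add: RFg.gsimps)
    also have "\<dots> = inv\<^bsub>RF n\<^esub> \<psi> g \<otimes>\<^bsub>RF n\<^esub> gen n i \<otimes>\<^bsub>RF n\<^esub> inv\<^bsub>RF n\<^esub> (inv\<^bsub>RF n\<^esub> \<psi> g)"
      using g i by (simp flip: e)
    finally show "\<exists>g\<in>carrier (RF n). \<psi> (gen n i) = g \<otimes>\<^bsub>RF n\<^esub> gen n i \<otimes>\<^bsub>RF n\<^esub> inv\<^bsub>RF n\<^esub> g"
      using g by (intro bexI[of _ "inv\<^bsub>RF n\<^esub> \<psi> g"]) (auto simp del: RFg.inv_inv)
  qed
qed

lemma hP_group: "group (hPSigma n)"
  unfolding hP_eq by (rule subgroup.subgroup_is_group[OF HP_subgroup AGg.is_group])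

interpretation hPg: group "hPSigma n" for n by (rule hP_group)

lemma hP_carrier: "carrier (hPSigma n) = HP n" by (simp add: hP_eq)
lemma hP_mult: "\<phi> \<otimes>\<^bsub>hPSigma n\<^esub> \<psi> = \<phi> \<otimes>\<^bsub>AutoGroup (RF n)\<^esub> \<psi>" by (simp add: hP_eq)
lemma hP_one: "\<one>\<^bsub>hPSigma n\<^esub> = (\<lambda>x\<in>carrier (RF n). x)" by (simp add: hP_eq AG_one)
lemma HP_auto: "\<phi> \<in> HP n \<Longrightarrow> \<phi> \<in> auto (RF n)" by (simp add: HP_def)

lemma hP_mult_apply: "\<phi> \<in> HP n \<Longrightarrow> \<psi> \<in> HP n \<Longrightarrow> x \<in> carrier (RF n) \<Longrightarrow>
   (\<phi> \<otimes>\<^bsub>hPSigma n\<^esub> \<psi>) x = \<phi> (\<psi> x)"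
  by (simp add: hP_mult AG_mult HP_auto compose_def)

lemma hP_inv: "\<phi> \<in> HP n \<Longrightarrow> inv\<^bsub>hPSigma n\<^esub> \<phi> = inv\<^bsub>AutoGroup (RF n)\<^esub> \<phi>"
  unfolding hP_eq by (rule AGg.m_inv_consistent[OF HP_subgroup])


definition rhof :: "nat \<Rightarrow> word \<Rightarrow> nat \<Rightarrow> word" where
  "rhof i w = (\<lambda>k. if k = i then w @ [(i, True)] @ word_inv w else [(k, True)])"

definition rho :: "nat \<Rightarrow> nat \<Rightarrow> word \<Rightarrow> word set \<Rightarrow> word set" where
  "rho n i w = ind n (rhof i w)"

definition noi :: "nat \<Rightarrow> word \<Rightarrow> bool" where
  "noi i w \<longleftrightarrow> (\<forall>a\<in>set w. fst a \<noteq> i)"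

lemma noi_simps[simp]: "noi i [] " "noi i (a # w) \<longleftrightarrow> fst a \<noteq> i \<and> noi i w"
  "noi i (u @ v) \<longleftrightarrow> noi i u \<and> noi i v"
  by (auto simp: noi_def)

lemma good_rhof: "i \<in> {1..n} \<Longrightarrow> w \<in> words n \<Longrightarrow> good n (rhof i w)"
  unfolding good_def
proof (intro ballI conjI)
  fix k assume k: "k \<in> {1..n}" and i: "i \<in> {1..n}" and w: "w \<in> words n"
  show "rhof i w k \<in> words n" using k i w by (simp add: rhof_def)
  show "\<exists>g\<in>words n. rf_eq n (rhof i w k) (g @ [(k, True)] @ word_inv g)"
  proof (cases "k = i")
    case True then show ?thesis using w i by (intro bexI[of _ w]) (auto simp: rhof_def intro!: rf_refl simp del: word_inv_append word_inv_Cons)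
  next
    case False then show ?thesis using k by (intro bexI[of _ "[]"]) (auto simp: rhof_def intro!: rf_refl)
  qed
qed

lemma subst_noi: "noi i u \<Longrightarrow> subst (rhof i w) u = u"
  by (induct u) (auto simp: letter_img_def rhof_def letter_inv_def)

lemma letter_img_rhof: "letter_img (rhof i w) (i, True) = w @ [(i, True)] @ word_inv w"
  by (simp add: letter_img_def rhof_def)

lemma rho_gen: "i \<in> {1..n} \<Longrightarrow> w \<in> words n \<Longrightarrow> k \<in> {1..n} \<Longrightarrow>
  rho n i w (gen n k) = (if k = i then rf_class n (w @ [(i, True)] @ word_inv w) else gen n k)"
  by (simp add: rho_def ind_gen good_rhof) (simp add: rhof_def gen_def)

lemma rho_hom: "i \<in> {1..n} \<Longrightarrow> w \<in> words n \<Longrightarrow> rho n i w \<in> hom (RF n) (RF n)"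
  by (simp add: rho_def ind_hom good_rhof)

lemma rho_ext: "rho n i w \<in> extensional (carrier (RF n))"
  by (simp add: rho_def ind_ext)

lemma rho_class: "i \<in> {1..n} \<Longrightarrow> w \<in> words n \<Longrightarrow> u \<in> words n \<Longrightarrow>
   rho n i w (rf_class n u) = rf_class n (subst (rhof i w) u)"
  by (simp add: rho_def ind_class good_rhof)

lemma hom_ext_eq:
  assumes h1: "h1 \<in> hom (RF n) (RF n)" "h1 \<in> extensional (carrier (RF n))"
    and h2: "h2 \<in> hom (RF n) (RF n)" "h2 \<in> extensional (carrier (RF n))"
    and eq: "\<And>k. k \<in> {1..n} \<Longrightarrow> h1 (gen n k) = h2 (gen n k)"
  shows "h1 = h2"
proof (rule extensionalityI[OF h1(2) h2(2)])
  show "h1 x = h2 x" if "x \<in> carrier (RF n)" for x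
    by (rule hom_eq_on_gens[OF RF_group h1(1) h2(1) eq that])
qed

lemma id_hom_RF: "(\<lambda>x\<in>carrier (RF n). x) \<in> hom (RF n) (RF n)"
  using RFg.id_in_auto by (simp add: auto_def)

lemma rho_compose:
  assumes i: "i \<in> {1..n}" and w: "w \<in> words n" "noi i w" and v: "v \<in> words n" "noi i v"
    and x: "x \<in> carrier (RF n)"
  shows "rho n i w (rho n i v x) = rho n i (v @ w) x"
proof -
  have "compose (carrier (RF n)) (rho n i w) (rho n i v) = rho n i (v @ w)"
  proof (rule hom_ext_eq)
    show "compose (carrier (RF n)) (rho n i w) (rho n i v) \<in> hom (RF n) (RF n)"
      unfolding compose_def using hom_compose[OF rho_hom[OF i v(1)] rho_hom[OF i w(1)]]
      by (auto simp: hom_def)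
    show "compose (carrier (RF n)) (rho n i w) (rho n i v) \<in> extensional (carrier (RF n))"
      by (simp add: compose_extensional)
    show "rho n i (v @ w) \<in> hom (RF n) (RF n)" "rho n i (v @ w) \<in> extensional (carrier (RF n))"
      using i w v by (auto intro: rho_hom rho_ext)
    fix k assume k: "k \<in> {1..n}"
    show "compose (carrier (RF n)) (rho n i w) (rho n i v) (gen n k) = rho n i (v @ w) (gen n k)"
      using i w v k
      by (auto simp: compose_def rho_gen rho_class subst_noi letter_img_rhof)
  qed
  then show ?thesis using x by (metis compose_eq)
qed

lemma rho_trivial:
  assumes i: "i \<in> {1..n}" and u: "u \<in> words n" and e: "rf_class n (u @ [(i, True)] @ word_inv u) = gen n i"
  shows "rho n i u = (\<lambda>x\<in>carrier (RF n). x)"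
proof (rule hom_ext_eq)
  show "rho n i u \<in> hom (RF n) (RF n)" "rho n i u \<in> extensional (carrier (RF n))"
    using i u by (auto intro: rho_hom rho_ext)
  show "(\<lambda>x\<in>carrier (RF n). x) \<in> hom (RF n) (RF n)" "(\<lambda>x\<in>carrier (RF n). x) \<in> extensional (carrier (RF n))"
    by (auto simp: id_hom_RF)
  fix k assume "k \<in> {1..n}" then show "rho n i u (gen n k) = (\<lambda>x\<in>carrier (RF n). x) (gen n k)"
    using i u e by (simp add: rho_gen)
qed

lemma rho_Nil: "i \<in> {1..n} \<Longrightarrow> rho n i [] = (\<lambda>x\<in>carrier (RF n). x)"
  by (rule rho_trivial) (auto simp: gen_def)

lemma class_inv_cancel: "w \<in> words n \<Longrightarrow> rf_class n (word_inv w @ w) = \<one>\<^bsub>RF n\<^esub>"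
  by (simp add: RF_one rf_class_eq cancel_inv')

lemma rho_inv_cancel:
  assumes i: "i \<in> {1..n}" and w: "w \<in> words n"
  shows "rho n i (word_inv w @ w) = (\<lambda>x\<in>carrier (RF n). x)"
proof (rule rho_trivial[OF i])
  show "word_inv w @ w \<in> words n" using w by simp
  have "rf_class n ((word_inv w @ w) @ [(i, True)] @ word_inv (word_inv w @ w))
     = rf_class n (word_inv w @ w) \<otimes>\<^bsub>RF n\<^esub> gen n i \<otimes>\<^bsub>RF n\<^esub> rf_class n (word_inv w @ w)"
    using i w by (simp add: RF_mult gen_def RFg.m_assoc del: word_inv_append word_inv_Cons) simp
  then show "rf_class n ((word_inv w @ w) @ [(i, True)] @ word_inv (word_inv w @ w)) = gen n i"
    using i w by (simp add: class_inv_cancel del: word_inv_append word_inv_Cons)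
qed

lemma noi_inv[simp]: "noi i (word_inv w) \<longleftrightarrow> noi i w"
  by (induct w) (auto simp: letter_inv_def)

lemma rho_auto:
  assumes i: "i \<in> {1..n}" and w: "w \<in> words n" "noi i w"
  shows "rho n i w \<in> auto (RF n)"
proof -
  have h: "rho n i w \<in> hom (RF n) (RF n)" using i w by (simp add: rho_hom)
  have h': "rho n i (word_inv w) \<in> hom (RF n) (RF n)" using i w by (simp add: rho_hom)
  have "bij_betw (rho n i w) (carrier (RF n)) (carrier (RF n))"
  proof (rule bij_betwI[where g = "rho n i (word_inv w)"])
    show "rho n i w \<in> carrier (RF n) \<rightarrow> carrier (RF n)" using h by (simp add: hom_def)
    show "rho n i (word_inv w) \<in> carrier (RF n) \<rightarrow> carrier (RF n)" using h' by (simp add: hom_def)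
    fix x assume x: "x \<in> carrier (RF n)"
    show "rho n i (word_inv w) (rho n i w x) = x"
      using rho_compose[OF i _ _ w x, of "word_inv w"] rho_inv_cancel[of i n "word_inv w"] w x i
      by simp
    show "rho n i w (rho n i (word_inv w) x) = x"
      using rho_compose[OF i w _ _ x, of "word_inv w"] rho_inv_cancel[OF i w(1)] w x by simp
  qed
  then show ?thesis using h rho_ext by (simp add: auto_def Bij_def)
qed

lemma rho_HP:
  assumes i: "i \<in> {1..n}" and w: "w \<in> words n" "noi i w"
  shows "rho n i w \<in> HP n"
  unfolding HP_def
proof (intro CollectI conjI ballI)
  show "rho n i w \<in> auto (RF n)" using assms by (rule rho_auto)
  fix k assume k: "k \<in> {1..n}"
  show "\<exists>g\<in>carrier (RF n). rho n i w (gen n k) = g \<otimes>\<^bsub>RF n\<^esub> gen n k \<otimes>\<^bsub>RF n\<^esub> inv\<^bsub>RF n\<^esub> g"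
  proof (cases "k = i")
    case True
    then show ?thesis using i w k rho_gen[OF i w(1) k]
      by (intro bexI[of _ "rf_class n w"]) (simp_all add: RF_mult RF_inv gen_def)
  next
    case False
    then show ?thesis using i w k by (intro bexI[of _ "\<one>\<^bsub>RF n\<^esub>"]) (simp_all add: rho_gen)
  qed
qed

lemma rho_mult:
  assumes i: "i \<in> {1..n}" and w: "w \<in> words n" "noi i w" and v: "v \<in> words n" "noi i v"
  shows "rho n i w \<otimes>\<^bsub>hPSigma n\<^esub> rho n i v = rho n i (v @ w)"
proof (rule auto_eq_on_gens)
  have "rho n i w \<otimes>\<^bsub>hPSigma n\<^esub> rho n i v \<in> carrier (hPSigma n)"
    using assms by (intro hPg.m_closed) (auto simp: hP_carrier rho_HP)
  then show "rho n i w \<otimes>\<^bsub>hPSigma n\<^esub> rho n i v \<in> auto (RF n)" by (simp add: hP_carrier HP_auto)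
  show "rho n i (v @ w) \<in> auto (RF n)" using assms by (intro rho_auto) auto
  fix k assume "k \<in> {1..n}"
  then show "(rho n i w \<otimes>\<^bsub>hPSigma n\<^esub> rho n i v) (gen n k) = rho n i (v @ w) (gen n k)"
    using assms by (simp add: hP_mult_apply rho_HP rho_compose)
qed

lemma chi_gens:
  assumes i: "i \<in> {1..n}" and j: "j \<in> {1..n}" and ij: "i \<noteq> j" and k: "k \<in> {1..n}"
  shows "rho n i [(j, False)] (gen n k) =
        (if k = i then inv\<^bsub>RF n\<^esub> (gen n j) \<otimes>\<^bsub>RF n\<^esub> gen n i \<otimes>\<^bsub>RF n\<^esub> gen n j else gen n k)"
proof -
  have e: "rf_class n ([(j, False)] @ [(i, True)] @ word_inv [(j, False)]) =
      inv\<^bsub>RF n\<^esub> (gen n j) \<otimes>\<^bsub>RF n\<^esub> gen n i \<otimes>\<^bsub>RF n\<^esub> gen n j"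
    using i j by (simp add: RF_mult gen_def RF_inv letter_inv_def)
  show ?thesis using rho_gen[OF i _ k, of "[(j, False)]"] j e by simp
qed

lemma chi_eq:
  assumes i: "i \<in> {1..n}" and j: "j \<in> {1..n}" and ij: "i \<noteq> j"
  shows "chi n i j = rho n i [(j, False)]"
  unfolding chi_def
proof (rule the_equality)
  show "rho n i [(j, False)] \<in> auto (RF n) \<and>
    (\<forall>k\<in>{1..n}. rho n i [(j, False)] (gen n k) =
        (if k = i then inv\<^bsub>RF n\<^esub> (gen n j) \<otimes>\<^bsub>RF n\<^esub> gen n i \<otimes>\<^bsub>RF n\<^esub> gen n j else gen n k))"
    using assms by (auto intro!: rho_auto simp: chi_gens)
  fix \<phi> assume p: "\<phi> \<in> auto (RF n) \<and>
    (\<forall>k\<in>{1..n}. \<phi> (gen n k) =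
        (if k = i then inv\<^bsub>RF n\<^esub> (gen n j) \<otimes>\<^bsub>RF n\<^esub> gen n i \<otimes>\<^bsub>RF n\<^esub> gen n j else gen n k))"
  show "\<phi> = rho n i [(j, False)]"
  proof (rule auto_eq_on_gens)
    show "\<phi> \<in> auto (RF n)" using p by blast
    show "rho n i [(j, False)] \<in> auto (RF n)" using assms by (intro rho_auto) auto
    fix k assume k: "k \<in> {1..n}"
    then show "\<phi> (gen n k) = rho n i [(j, False)] (gen n k)"
      using assms p by (auto simp: chi_gens)
  qed
qed

lemma rho_True:
  assumes i: "i \<in> {1..n}" and j: "j \<in> {1..n}" and ij: "i \<noteq> j"
  shows "rho n i [(j, True)] = inv\<^bsub>hPSigma n\<^esub> (chi n i j)"
proof -
  have "rho n i [(j, True)] \<otimes>\<^bsub>hPSigma n\<^esub> rho n i [(j, False)] = rho n i [(j, False), (j, True)]"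
    using assms by (simp add: rho_mult)
  also have "\<dots> = rho n i (word_inv [(j, True)] @ [(j, True)])"
    by (simp add: letter_inv_def)
  also have "\<dots> = \<one>\<^bsub>hPSigma n\<^esub>" using i j rho_inv_cancel[of i n "[(j, True)]"] by (simp add: hP_one)
  finally show ?thesis
    using assms by (intro hPg.inv_equality[symmetric]) (auto simp: chi_eq hP_carrier intro!: rho_HP)
qed

abbreviation chis :: "nat \<Rightarrow> (word set \<Rightarrow> word set) set" where
  "chis n \<equiv> (\<lambda>(i, j). chi n i j) ` chi_index n"

lemma rho_generate:
  assumes i: "i \<in> {1..n}"
  shows "w \<in> words n \<Longrightarrow> noi i w \<Longrightarrow> rho n i w \<in> generate (hPSigma n) (chis n)"
proof (induct w)
  case Nil then show ?case using i by (simp add: rho_Nil generate.one flip: hP_one)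
next
  case (Cons a w)
  obtain j b where a: "a = (j, b)" by (cases a)
  have j: "j \<in> {1..n}" "j \<noteq> i" using Cons a by auto
  have ch: "chi n i j \<in> chis n" using i j by (force simp: chi_index_def)
  have ra: "rho n i [a] \<in> generate (hPSigma n) (chis n)"
  proof (cases b)
    case True then show ?thesis using a i j ch by (simp add: rho_True generate.inv)
  next
    case False then show ?thesis using a i j ch by (simp add: chi_eq[symmetric] generate.incl)
  qed
  have "rho n i (a # w) = rho n i w \<otimes>\<^bsub>hPSigma n\<^esub> rho n i [a]"
    using Cons i j a by (simp add: rho_mult)
  then show ?case using Cons ra by (simp add: generate.eng)
qed


lemma (in group) comm_conj_id:
  assumes "x \<in> carrier G" "c \<in> carrier G" "x \<otimes> c = c \<otimes> x"
  shows "x \<otimes> c \<otimes> inv x = c" "inv x \<otimes> c \<otimes> x = c"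
proof -
  show "x \<otimes> c \<otimes> inv x = c" using assms by (simp add: m_assoc)
  have "inv x \<otimes> c \<otimes> x = inv x \<otimes> (x \<otimes> c)" using assms by (metis m_assoc inv_closed)
  also have "\<dots> = c" using assms(1,2) by (simp add: gcancel2)
  finally show "inv x \<otimes> c \<otimes> x = c" .
qed

lemma conj_class:
  assumes a: "a \<in> letters n" and u: "u \<in> words n" and k: "k \<in> {1..n}"
  shows "rf_class n ((a # u) @ [(k, True)] @ word_inv (a # u)) =
     rf_class n [a] \<otimes>\<^bsub>RF n\<^esub> rf_class n (u @ [(k, True)] @ word_inv u) \<otimes>\<^bsub>RF n\<^esub> inv\<^bsub>RF n\<^esub> rf_class n [a]"
proof -
  have e: "(a # u) @ [(k, True)] @ word_inv (a # u) = [a] @ (u @ [(k, True)] @ word_inv u) @ word_inv [a]"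
    by simp
  show ?thesis unfolding e using a u k
    apply (simp only: rf_class_append words_append words_Cons words_Nil words_inv letters_iff RF_inv simp_thms)
    apply (simp add: RFg.m_assoc)
    done
qed

lemma reduce_conj:
  assumes k: "k \<in> {1..n}"
  shows "u \<in> words n \<Longrightarrow> \<exists>h\<in>words n. noi k h \<and>
     rf_class n (h @ [(k, True)] @ word_inv h) = rf_class n (u @ [(k, True)] @ word_inv u)"
proof (induct u)
  case Nil then show ?case by (intro bexI[of _ "[]"]) auto
next
  case (Cons a u)
  then obtain h where h: "h \<in> words n" "noi k h"
    "rf_class n (h @ [(k, True)] @ word_inv h) = rf_class n (u @ [(k, True)] @ word_inv u)"
    by auto
  have a: "a \<in> letters n" and u: "u \<in> words n" using Cons by auto
  have cu: "rf_class n ((a # u) @ [(k, True)] @ word_inv (a # u)) =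
     rf_class n [a] \<otimes>\<^bsub>RF n\<^esub> rf_class n (h @ [(k, True)] @ word_inv h) \<otimes>\<^bsub>RF n\<^esub> inv\<^bsub>RF n\<^esub> rf_class n [a]"
    using conj_class[OF a u k] h by simp
  show ?case
  proof (cases "fst a = k")
    case False
    then show ?thesis using h a k u cu conj_class[OF a h(1) k]
      by (intro bexI[of _ "a # h"]) auto
  next
    case True
    obtain b where ab: "a = (k, b)" using True by (cases a) auto
    define C where "C = rf_class n (h @ [(k, True)] @ word_inv h)"
    have C: "C = rf_class n h \<otimes>\<^bsub>RF n\<^esub> gen n k \<otimes>\<^bsub>RF n\<^esub> inv\<^bsub>RF n\<^esub> rf_class n h"
      using h k by (simp add: C_def RF_mult RF_inv gen_def del: word_inv_append word_inv_Cons)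
    have Cc: "C \<in> carrier (RF n)" unfolding C_def using h(1) k by simp
    have com: "gen n k \<otimes>\<^bsub>RF n\<^esub> C = C \<otimes>\<^bsub>RF n\<^esub> gen n k"
      using gen_commutes[OF k, of "inv\<^bsub>RF n\<^esub> rf_class n h"] h by (simp add: C)
    have "rf_class n [a] \<otimes>\<^bsub>RF n\<^esub> C \<otimes>\<^bsub>RF n\<^esub> inv\<^bsub>RF n\<^esub> rf_class n [a] = C"
    proof (cases b)
      case True then show ?thesis using RFg.comm_conj_id(1)[OF _ Cc com] k ab by (simp add: gen_def)
    next
      case False then show ?thesis using RFg.comm_conj_id(2)[OF _ Cc com] k ab
        by (simp add: class_single_False)
    qed
    then show ?thesis using h cu u k by (intro bexI[of _ h]) (auto simp: C_def)
  qed
qed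

lemma chis_HP: "chis n \<subseteq> HP n"
  by (auto simp: chi_index_def chi_eq intro!: rho_HP)

lemma generate_HP: "generate (hPSigma n) (chis n) \<subseteq> HP n"
  using hPg.generate_in_carrier[of "chis n" n] chis_HP[of n] by (auto simp: hP_carrier)

lemma HP_generated:
  assumes p: "\<phi> \<in> HP n"
  shows "\<phi> \<in> generate (hPSigma n) (chis n)"
proof -
  have pa: "\<phi> \<in> auto (RF n)" using p by (rule HP_auto)
  have "m \<le> n \<Longrightarrow> \<exists>\<sigma>\<in>generate (hPSigma n) (chis n).
     \<forall>k\<in>{1..n}. \<sigma> (gen n k) = (if k \<le> m then \<phi> (gen n k) else gen n k)" for m
  proof (induct m)
    case 0
    then show ?case
    proof (intro bexI[of _ "\<one>\<^bsub>hPSigma n\<^esub>"])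
      show "\<one>\<^bsub>hPSigma n\<^esub> \<in> generate (hPSigma n) (chis n)" by (rule generate.one)
    qed (auto simp: hP_one)
  next
    case (Suc m)
    then obtain \<sigma> where s: "\<sigma> \<in> generate (hPSigma n) (chis n)"
      and sg: "\<forall>k\<in>{1..n}. \<sigma> (gen n k) = (if k \<le> m then \<phi> (gen n k) else gen n k)" by auto
    define k where "k = Suc m"
    have k: "k \<in> {1..n}" using Suc by (simp add: k_def)
    have sH: "\<sigma> \<in> HP n" using s generate_HP by blast
    have sa: "\<sigma> \<in> auto (RF n)" using sH by (rule HP_auto)
    interpret S: group_hom "RF n" "RF n" \<sigma> using sa by (rule auto_hom)
    obtain g where g: "g \<in> carrier (RF n)" "\<phi> (gen n k) = g \<otimes>\<^bsub>RF n\<^esub> gen n k \<otimes>\<^bsub>RF n\<^esub> inv\<^bsub>RF n\<^esub> g"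
      using p k unfolding HP_def by blast
    define h' where "h' = (inv\<^bsub>AutoGroup (RF n)\<^esub> \<sigma>) g"
    have ia: "inv\<^bsub>AutoGroup (RF n)\<^esub> \<sigma> \<in> auto (RF n)" using sa AGg.inv_closed by (simp add: AG_carrier)
    have h'c: "h' \<in> carrier (RF n)" using auto_closed[OF ia g(1)] by (simp add: h'_def)
    have sh': "\<sigma> h' = g" using AG_inv_right[OF sa g(1)] by (simp add: h'_def)
    obtain u where u: "u \<in> words n" "h' = rf_class n u" using h'c by (auto simp: RF_carrier)
    obtain h where h: "h \<in> words n" "noi k h"
      "rf_class n (h @ [(k, True)] @ word_inv h) = rf_class n (u @ [(k, True)] @ word_inv u)"
      using reduce_conj[OF k u(1)] by blast
    have hc: "rf_class n (h @ [(k, True)] @ word_inv h) = h' \<otimes>\<^bsub>RF n\<^esub> gen n k \<otimes>\<^bsub>RF n\<^esub> inv\<^bsub>RF n\<^esub> h'"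
      using h(3) u k by (simp add: RF_mult RF_inv gen_def del: word_inv_append word_inv_Cons)
    have rH: "rho n k h \<in> HP n" using k h by (intro rho_HP) auto
    show ?case
    proof (intro bexI[of _ "\<sigma> \<otimes>\<^bsub>hPSigma n\<^esub> rho n k h"] ballI)
      show "\<sigma> \<otimes>\<^bsub>hPSigma n\<^esub> rho n k h \<in> generate (hPSigma n) (chis n)"
        using s rho_generate[OF k h(1,2)] by (rule generate.eng)
      fix l assume l: "l \<in> {1..n}"
      have "(\<sigma> \<otimes>\<^bsub>hPSigma n\<^esub> rho n k h) (gen n l) = \<sigma> (rho n k h (gen n l))"
        using sH rH l by (simp add: hP_mult_apply)
      also have "\<dots> = (if l \<le> Suc m then \<phi> (gen n l) else gen n l)"
      proof (cases "l = k")
        case True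
        have "\<sigma> (rho n k h (gen n l)) = \<sigma> (h' \<otimes>\<^bsub>RF n\<^esub> gen n k \<otimes>\<^bsub>RF n\<^esub> inv\<^bsub>RF n\<^esub> h')"
          using True rho_gen[OF k h(1) k] hc by simp
        also have "\<dots> = g \<otimes>\<^bsub>RF n\<^esub> gen n k \<otimes>\<^bsub>RF n\<^esub> inv\<^bsub>RF n\<^esub> g"
          using h'c k sh' sg by (simp add: k_def)
        finally show ?thesis using True g by (simp add: k_def)
      next
        case False
        then show ?thesis using rho_gen[OF k h(1) l] sg l by (auto simp: k_def)
      qed
      finally show "(\<sigma> \<otimes>\<^bsub>hPSigma n\<^esub> rho n k h) (gen n l) = (if l \<le> Suc m then \<phi> (gen n l) else gen n l)" .
    qed
  qed
  from this[OF le_refl] obtain \<sigma> where s: "\<sigma> \<in> generate (hPSigma n) (chis n)"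
      and sg: "\<forall>k\<in>{1..n}. \<sigma> (gen n k) = (if k \<le> n then \<phi> (gen n k) else gen n k)" by blast
  have "\<sigma> = \<phi>"
  proof (rule auto_eq_on_gens)
    show "\<sigma> \<in> auto (RF n)" using s generate_HP HP_auto by blast
    show "\<phi> \<in> auto (RF n)" by (rule pa)
    show "\<sigma> (gen n k) = \<phi> (gen n k)" if "k \<in> {1..n}" for k using sg that by auto
  qed
  then show ?thesis using s by simp
qed

theorem part1: "carrier (hPSigma n) = generate (hPSigma n) (chis n)"
  using HP_generated generate_HP by (auto simp: hP_carrier)


type_synonym heis = "int \<times> int \<times> int"

fun hm :: "heis \<Rightarrow> heis \<Rightarrow> heis" where
  "hm (a, b, c) (a', b', c') = (a + a', b + b', c + c' + a * b')"

fun hinv :: "heis \<Rightarrow> heis" where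
  "hinv (a, b, c) = (- a, - b, - c + a * b)"

definition lt :: "nat \<Rightarrow> nat \<Rightarrow> letter \<Rightarrow> heis" where
  "lt i j x = (if fst x = i then (if snd x then (1, 0, 0) else (-1, 0, 0))
     else if fst x = j then (if snd x then (0, 1, 0) else (0, -1, 0)) else (0, 0, 0))"

definition heis :: "nat \<Rightarrow> nat \<Rightarrow> word \<Rightarrow> heis" where
  "heis i j w = foldr (\<lambda>a acc. hm (lt i j a) acc) w (0, 0, 0)"

lemma hm_assoc: "hm (hm x y) z = hm x (hm y z)"
  by (cases x; cases y; cases z) (simp add: algebra_simps)

lemma hm_zero[simp]: "hm (0, 0, 0) x = x" "hm x (0, 0, 0) = x"
  by (cases x; simp)+

lemma hinv_hm: "hinv (hm x y) = hm (hinv y) (hinv x)"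
  by (cases x; cases y) (simp add: algebra_simps)

lemma hm_hinv[simp]: "hm x (hinv x) = (0, 0, 0)"
  by (cases x) (simp add: algebra_simps)

lemma lt_inv: "lt i j (letter_inv a) = hinv (lt i j a)"
  by (cases a) (auto simp: lt_def letter_inv_def)

lemma heis_Nil[simp]: "heis i j [] = (0, 0, 0)"
  and heis_Cons[simp]: "heis i j (a # w) = hm (lt i j a) (heis i j w)"
  by (simp_all add: heis_def)

lemma heis_append[simp]: "heis i j (u @ v) = hm (heis i j u) (heis i j v)"
  by (induct u) (simp_all add: hm_assoc)

lemma heis_inv[simp]: "heis i j (word_inv w) = hinv (heis i j w)"
  by (induct w) (simp_all add: lt_inv hinv_hm)

lemma heis_comm_conj: "hm p (hm q (hm (hinv p) (hinv q))) = (0, 0, 0)"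
  if "q = hm (hinv W) (hm p W)" for p q W :: heis
  using that by (cases p; cases W) (simp add: algebra_simps)

lemma heis_comm8: "hm p (hm (hinv W) (hm p (hm W (hm (hinv p) (hm (hinv W) (hm (hinv p) W)))))) = (0, 0, 0)"
  by (cases p; cases W) (simp add: algebra_simps)

lemma heis_relator: "heis i j (relator k w) = (0, 0, 0)"
  unfolding relator_def comm_word_def
  by (simp add: hm_assoc lt_inv heis_comm8)

lemma heis_rf_eq: "rf_eq n u v \<Longrightarrow> heis i j u = heis i j v"
proof (induct rule: rf_eq.induct)
  case (rf_cancel u v a)
  have "hm (lt i j a) (hm (lt i j (letter_inv a)) (heis i j v)) = heis i j v"
    by (simp add: lt_inv flip: hm_assoc)
  then show ?case by simp
next
  case (rf_rel u v k w)
  have "hm (heis i j (relator k w)) (heis i j v) = heis i j v" by (simp add: heis_relator)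
  then show ?case by simp
qed auto

definition Hc :: "nat \<Rightarrow> nat \<Rightarrow> word set \<Rightarrow> heis" where
  "Hc i j A = heis i j (SOME w. w \<in> A)"

lemma Hc_class: "w \<in> words n \<Longrightarrow> Hc i j (rf_class n w) = heis i j w"
proof -
  assume w: "w \<in> words n"
  have "(SOME v. v \<in> rf_class n w) \<in> rf_class n w" using rf_class_mem[OF w] by (rule someI)
  then have "rf_eq n w (SOME v. v \<in> rf_class n w)" by (simp add: rf_class_def)
  then show ?thesis unfolding Hc_def by (metis heis_rf_eq)
qed

lemma Hc_mult: "A \<in> carrier (RF n) \<Longrightarrow> B \<in> carrier (RF n) \<Longrightarrow>
  Hc i j (A \<otimes>\<^bsub>RF n\<^esub> B) = hm (Hc i j A) (Hc i j B)"
  by (auto simp: RF_carrier RF_mult Hc_class)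

lemma Hc_inv: "A \<in> carrier (RF n) \<Longrightarrow> Hc i j (inv\<^bsub>RF n\<^esub> A) = hinv (Hc i j A)"
  by (auto simp: RF_carrier RF_inv Hc_class)

lemma Hc_one: "Hc i j (\<one>\<^bsub>RF n\<^esub>) = (0, 0, 0)"
  by (simp add: RF_one Hc_class)

definition hb :: "heis \<Rightarrow> int" where "hb t = fst (snd t)"
definition hc :: "heis \<Rightarrow> int" where "hc t = snd (snd t)"

lemma hb_hm[simp]: "hb (hm x y) = hb x + hb y" by (cases x; cases y) (simp add: hb_def)
lemma hb_hinv[simp]: "hb (hinv x) = - hb x" by (cases x) (simp add: hb_def)

lemma Hc_gen: "i \<in> {1..n} \<Longrightarrow> Hc i j (gen n i) = (1, 0, 0)"
  by (simp add: gen_def Hc_class lt_def)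

lemma Hc_conj_gen:
  assumes i: "i \<in> {1..n}" and G: "G \<in> carrier (RF n)"
  shows "- hc (Hc i j (G \<otimes>\<^bsub>RF n\<^esub> gen n i \<otimes>\<^bsub>RF n\<^esub> inv\<^bsub>RF n\<^esub> G)) = hb (Hc i j G)"
proof -
  obtain a b c where abc: "Hc i j G = (a, b, c)" by (cases "Hc i j G")
  show ?thesis using i G by (simp add: Hc_mult Hc_inv Hc_gen abc hb_def hc_def algebra_simps)
qed

definition eps :: "nat \<Rightarrow> nat \<Rightarrow> nat \<Rightarrow> (word set \<Rightarrow> word set) \<Rightarrow> int" where
  "eps n i j \<phi> = - hc (Hc i j (\<phi> (gen n i)))"

lemma hb_preserved:
  assumes p: "\<phi> \<in> HP n" and A: "A \<in> carrier (RF n)"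
  shows "hb (Hc i j (\<phi> A)) = hb (Hc i j A)"
proof -
  have pa: "\<phi> \<in> auto (RF n)" using p by (rule HP_auto)
  interpret P: group_hom "RF n" "RF n" \<phi> using pa by (rule auto_hom)
  have gk: "hb (Hc i j (\<phi> (gen n k))) = hb (Hc i j (gen n k))" if k: "k \<in> {1..n}" for k
  proof -
    obtain g where g: "g \<in> carrier (RF n)" "\<phi> (gen n k) = g \<otimes>\<^bsub>RF n\<^esub> gen n k \<otimes>\<^bsub>RF n\<^esub> inv\<^bsub>RF n\<^esub> g"
      using p k unfolding HP_def by blast
    show ?thesis using g k by (simp add: Hc_mult Hc_inv)
  qed
  have "w \<in> words n \<Longrightarrow> hb (Hc i j (\<phi> (rf_class n w))) = hb (Hc i j (rf_class n w))" for w
  proof (induct w)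
    case Nil then show ?case by (simp flip: RF_one)
  next
    case (Cons a w)
    obtain k s where a: "a = (k, s)" by (cases a)
    have k: "k \<in> {1..n}" using Cons a by auto
    have e: "rf_class n (a # w) = rf_class n [a] \<otimes>\<^bsub>RF n\<^esub> rf_class n w"
      using Cons by (simp add: RF_mult)
    have "hb (Hc i j (\<phi> (rf_class n [a]))) = hb (Hc i j (rf_class n [a]))"
    proof (cases s)
      case True then show ?thesis using gk[OF k] a by (simp add: gen_def)
    next
      case False then show ?thesis using gk[OF k] a k by (simp add: class_single_False Hc_inv)
    qed
    then show ?case using Cons k a e by (simp add: Hc_mult)
  qed
  then show ?thesis using A by (auto simp: RF_carrier)
qed

lemma eps_HP:
  assumes p: "\<phi> \<in> HP n" and i: "i \<in> {1..n}"
  obtains G where "G \<in> carrier (RF n)" "\<phi> (gen n i) = G \<otimes>\<^bsub>RF n\<^esub> gen n i \<otimes>\<^bsub>RF n\<^esub> inv\<^bsub>RF n\<^esub> G"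
    "eps n i j \<phi> = hb (Hc i j G)"
proof -
  obtain g where g: "g \<in> carrier (RF n)" "\<phi> (gen n i) = g \<otimes>\<^bsub>RF n\<^esub> gen n i \<otimes>\<^bsub>RF n\<^esub> inv\<^bsub>RF n\<^esub> g"
    using p i unfolding HP_def by blast
  then show ?thesis using that Hc_conj_gen[OF i g(1), of j] by (simp add: eps_def)
qed

lemma eps_mult:
  assumes p: "\<phi> \<in> HP n" and q: "\<psi> \<in> HP n" and i: "i \<in> {1..n}"
  shows "eps n i j (\<phi> \<otimes>\<^bsub>hPSigma n\<^esub> \<psi>) = eps n i j \<phi> + eps n i j \<psi>"
proof -
  have pa: "\<phi> \<in> auto (RF n)" using p by (rule HP_auto)
  interpret P: group_hom "RF n" "RF n" \<phi> using pa by (rule auto_hom)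
  obtain G where G: "G \<in> carrier (RF n)" "\<psi> (gen n i) = G \<otimes>\<^bsub>RF n\<^esub> gen n i \<otimes>\<^bsub>RF n\<^esub> inv\<^bsub>RF n\<^esub> G"
    "eps n i j \<psi> = hb (Hc i j G)" using eps_HP[OF q i] by blast
  obtain G' where G': "G' \<in> carrier (RF n)" "\<phi> (gen n i) = G' \<otimes>\<^bsub>RF n\<^esub> gen n i \<otimes>\<^bsub>RF n\<^esub> inv\<^bsub>RF n\<^esub> G'"
    "eps n i j \<phi> = hb (Hc i j G')" using eps_HP[OF p i] by blast
  have "(\<phi> \<otimes>\<^bsub>hPSigma n\<^esub> \<psi>) (gen n i) = \<phi> G \<otimes>\<^bsub>RF n\<^esub> (G' \<otimes>\<^bsub>RF n\<^esub> gen n i \<otimes>\<^bsub>RF n\<^esub> inv\<^bsub>RF n\<^esub> G') \<otimes>\<^bsub>RF n\<^esub> inv\<^bsub>RF n\<^esub> \<phi> G"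
    using p q i G G' by (simp add: hP_mult_apply)
  also have "\<dots> = (\<phi> G \<otimes>\<^bsub>RF n\<^esub> G') \<otimes>\<^bsub>RF n\<^esub> gen n i \<otimes>\<^bsub>RF n\<^esub> inv\<^bsub>RF n\<^esub> (\<phi> G \<otimes>\<^bsub>RF n\<^esub> G')"
    using G G' i by (simp add: RFg.gsimps)
  finally have "eps n i j (\<phi> \<otimes>\<^bsub>hPSigma n\<^esub> \<psi>) = hb (Hc i j (\<phi> G \<otimes>\<^bsub>RF n\<^esub> G'))"
    using Hc_conj_gen[OF i, of "\<phi> G \<otimes>\<^bsub>RF n\<^esub> G'" j] G G' by (simp add: eps_def)
  also have "\<dots> = eps n i j \<phi> + eps n i j \<psi>"
    using G G' hb_preserved[OF p G(1)] by (simp add: Hc_mult)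
  finally show ?thesis .
qed

lemma eps_chi:
  assumes i: "i \<in> {1..n}" and j: "j \<in> {1..n}" and ij: "i \<noteq> j" and kl: "(k, l) \<in> chi_index n"
  shows "eps n i j (chi n k l) = (if (k, l) = (i, j) then -1 else 0)"
proof -
  have k: "k \<in> {1..n}" and l: "l \<in> {1..n}" and kl': "k \<noteq> l" using kl by (auto simp: chi_index_def)
  have cg: "chi n k l (gen n i) = (if i = k then inv\<^bsub>RF n\<^esub> (gen n l) \<otimes>\<^bsub>RF n\<^esub> gen n i \<otimes>\<^bsub>RF n\<^esub> gen n l else gen n i)"
    using chi_eq[OF k l kl'] chi_gens[OF k l kl' i] by simp
  show ?thesis
  proof (cases "i = k")
    case True
    have "eps n i j (chi n k l) = hb (Hc i j (inv\<^bsub>RF n\<^esub> (gen n l)))"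
      using Hc_conj_gen[OF i, of "inv\<^bsub>RF n\<^esub> (gen n l)" j] cg True l by (simp add: eps_def)
    also have "\<dots> = (if l = j then -1 else 0)"
      using l True kl' by (simp add: Hc_inv gen_def Hc_class lt_def hb_def)
    finally show ?thesis using True by auto
  next
    case False
    have "eps n i j (chi n k l) = hb (Hc i j \<one>\<^bsub>RF n\<^esub>)"
      using Hc_conj_gen[OF i, of "\<one>\<^bsub>RF n\<^esub>" j] cg False i by (simp add: eps_def)
    then show ?thesis using False by (simp add: Hc_one hb_def)
  qed
qed


lemma finite_chi_index: "finite (chi_index n)"
  by (rule finite_subset[of _ "{1..n} \<times> {1..n}"]) (auto simp: chi_index_def)

definition Phi :: "nat \<Rightarrow> (word set \<Rightarrow> word set) \<Rightarrow> (nat \<times> nat \<Rightarrow>\<^sub>0 int)" where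
  "Phi n \<phi> = (\<Sum>a\<in>chi_index n. frag_cmul (- eps n (fst a) (snd a) \<phi>) (frag_of a))"

lemma Phi_carrier: "Phi n \<phi> \<in> carrier (free_Abelian_group (chi_index n))"
  unfolding Phi_def
  by (rule sum_closed_free_Abelian_group) (auto dest: subsetD[OF keys_cmul])

lemma Phi_hom: "Phi n \<in> hom (hPSigma n) (free_Abelian_group (chi_index n))"
proof (rule homI)
  fix x assume "x \<in> carrier (hPSigma n)"
  show "Phi n x \<in> carrier (free_Abelian_group (chi_index n))" by (rule Phi_carrier)
next
  fix x y assume x: "x \<in> carrier (hPSigma n)" and y: "y \<in> carrier (hPSigma n)"
  have "Phi n (x \<otimes>\<^bsub>hPSigma n\<^esub> y) = (\<Sum>a\<in>chi_index n. frag_cmul (- eps n (fst a) (snd a) x) (frag_of a)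
        + frag_cmul (- eps n (fst a) (snd a) y) (frag_of a))"
    unfolding Phi_def
  proof (rule sum.cong[OF refl])
    fix a assume a: "a \<in> chi_index n"
    then have "fst a \<in> {1..n}" by (auto simp: chi_index_def)
    then show "frag_cmul (- eps n (fst a) (snd a) (x \<otimes>\<^bsub>hPSigma n\<^esub> y)) (frag_of a) =
      frag_cmul (- eps n (fst a) (snd a) x) (frag_of a) + frag_cmul (- eps n (fst a) (snd a) y) (frag_of a)"
      using x y by (simp add: eps_mult hP_carrier flip: frag_cmul_distrib)
  qed
  then show "Phi n (x \<otimes>\<^bsub>hPSigma n\<^esub> y) = Phi n x \<otimes>\<^bsub>free_Abelian_group (chi_index n)\<^esub> Phi n y"
    by (simp add: Phi_def sum.distrib)
qed

lemma Phi_chi: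
  assumes kl: "(k, l) \<in> chi_index n"
  shows "Phi n (chi n k l) = frag_of (k, l)"
proof -
  have "Phi n (chi n k l) = (\<Sum>a\<in>chi_index n. if a = (k, l) then frag_of a else 0)"
    unfolding Phi_def
  proof (rule sum.cong[OF refl])
    fix a assume a: "a \<in> chi_index n"
    then have "fst a \<in> {1..n}" "snd a \<in> {1..n}" "fst a \<noteq> snd a" by (auto simp: chi_index_def)
    then show "frag_cmul (- eps n (fst a) (snd a) (chi n k l)) (frag_of a) = (if a = (k, l) then frag_of a else 0)"
      using eps_chi[of "fst a" n "snd a" k l] kl by (cases a) auto
  qed
  also have "\<dots> = frag_of (k, l)" using kl finite_chi_index by (simp add: sum.delta')
  finally show ?thesis .
qed

interpretation PhiH: group_hom "hPSigma n" "free_Abelian_group (chi_index n)" "Phi n" for n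
  by (simp add: group_hom_def group_hom_axioms_def hP_group Phi_hom)

abbreviation DD :: "nat \<Rightarrow> (word set \<Rightarrow> word set) set" where
  "DD n \<equiv> derived (hPSigma n) (carrier (hPSigma n))"

interpretation DN: normal "DD n" "hPSigma n" for n
  by (rule hPg.derived_self_is_normal)

lemma D_ker: "x \<in> DD n \<Longrightarrow> Phi n x = 0"
proof -
  assume x: "x \<in> DD n"
  have "derived_set (hPSigma n) (carrier (hPSigma n)) \<subseteq> kernel (hPSigma n) (free_Abelian_group (chi_index n)) (Phi n)"
  proof
    fix h assume "h \<in> derived_set (hPSigma n) (carrier (hPSigma n))"
    then obtain a b where ab: "a \<in> carrier (hPSigma n)" "b \<in> carrier (hPSigma n)"
      "h = a \<otimes>\<^bsub>hPSigma n\<^esub> b \<otimes>\<^bsub>hPSigma n\<^esub> inv\<^bsub>hPSigma n\<^esub> a \<otimes>\<^bsub>hPSigma n\<^esub> inv\<^bsub>hPSigma n\<^esub> b"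
      by blast
    have ka: "Poly_Mapping.keys (Phi n a) \<subseteq> chi_index n" "Poly_Mapping.keys (Phi n b) \<subseteq> chi_index n"
      using Phi_carrier[of n] by auto
    have "Phi n h = Phi n a + Phi n b + - Phi n a + - Phi n b"
      using ab ka by (simp add: PhiH.hom_inv)
    also have "\<dots> = 0" by simp
    finally show "h \<in> kernel (hPSigma n) (free_Abelian_group (chi_index n)) (Phi n)"
      using ab by (simp add: kernel_def)
  qed
  then have "DD n \<subseteq> kernel (hPSigma n) (free_Abelian_group (chi_index n)) (Phi n)"
    unfolding derived_def by (rule hPg.generate_subgroup_incl[OF _ PhiH.subgroup_kernel])
  then show ?thesis using x by (auto simp: kernel_def)
qed

definition Phibar :: "nat \<Rightarrow> (word set \<Rightarrow> word set) set \<Rightarrow> (nat \<times> nat \<Rightarrow>\<^sub>0 int)" where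
  "Phibar n C = Phi n (SOME x. x \<in> C)"

lemma Phibar_coset:
  assumes x: "x \<in> carrier (hPSigma n)"
  shows "Phibar n (DD n #>\<^bsub>hPSigma n\<^esub> x) = Phi n x"
proof -
  define y where "y = (SOME y. y \<in> DD n #>\<^bsub>hPSigma n\<^esub> x)"
  have "y \<in> DD n #>\<^bsub>hPSigma n\<^esub> x"
    unfolding y_def by (rule someI[of _ x]) (rule hPg.rcos_self[OF x DN.subgroup_axioms])
  then obtain d where d: "d \<in> DD n" "y = d \<otimes>\<^bsub>hPSigma n\<^esub> x"
    unfolding r_coset_def by blast
  have dc: "d \<in> carrier (hPSigma n)" using d(1) DN.subset by blast
  have "Phi n y = Phi n d + Phi n x" using d dc x by simp
  then show ?thesis using D_ker[OF d(1)] by (simp add: Phibar_def y_def)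
qed

lemma Phibar_hom: "Phibar n \<in> hom (hPSigma n Mod DD n) (free_Abelian_group (chi_index n))"
proof (rule homI)
  fix C assume "C \<in> carrier (hPSigma n Mod DD n)"
  show "Phibar n C \<in> carrier (free_Abelian_group (chi_index n))"
    unfolding Phibar_def by (rule Phi_carrier)
next
  fix C1 C2 assume C1: "C1 \<in> carrier (hPSigma n Mod DD n)" and C2: "C2 \<in> carrier (hPSigma n Mod DD n)"
  obtain x where x: "x \<in> carrier (hPSigma n)" "C1 = DD n #>\<^bsub>hPSigma n\<^esub> x"
    using C1 by (auto simp: carrier_FactGroup)
  obtain y where y: "y \<in> carrier (hPSigma n)" "C2 = DD n #>\<^bsub>hPSigma n\<^esub> y"
    using C2 by (auto simp: carrier_FactGroup)
  show "Phibar n (C1 \<otimes>\<^bsub>hPSigma n Mod DD n\<^esub> C2) = Phibar n C1 \<otimes>\<^bsub>free_Abelian_group (chi_index n)\<^esub> Phibar n C2"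
    using x y by (simp add: DN.rcos_sum Phibar_coset)
qed

interpretation AbG: comm_group "hPSigma n Mod DD n" for n
  by (rule hPg.derived_quot_is_comm_group)

lemma part2:
  "\<exists>\<psi>. \<psi> \<in> iso (free_Abelian_group (chi_index n)) (abelianization (hPSigma n))
      \<and> (\<forall>(i, j) \<in> chi_index n. \<psi> (frag_of (i, j)) = DD n #>\<^bsub>hPSigma n\<^esub> chi n i j)"
proof -
  let ?FA = "free_Abelian_group (chi_index n)"
  let ?Ab = "hPSigma n Mod DD n"
  define f where "f = (\<lambda>a. DD n #>\<^bsub>hPSigma n\<^esub> chi n (fst a) (snd a))"
  have chiC: "chi n (fst a) (snd a) \<in> carrier (hPSigma n)" if "a \<in> chi_index n" for a
    using that chis_HP[of n] by (cases a) (auto simp: hP_carrier)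
  have fS: "f ` chi_index n \<subseteq> carrier ?Ab"
    using chiC by (auto simp: f_def carrier_FactGroup)
  obtain \<psi> where psi: "\<psi> \<in> hom ?FA ?Ab" and pf: "\<And>a. a \<in> chi_index n \<Longrightarrow> \<psi> (frag_of a) = f a"
    by (rule AbG.free_Abelian_group_universal[OF fS], rule that, assumption+)
  interpret PsiH: group_hom ?FA ?Ab \<psi>
    using psi by (simp add: group_hom_def group_hom_axioms_def AbG.is_group)
  have comp: "Phibar n \<circ> \<psi> \<in> hom ?FA ?FA" using psi Phibar_hom by (rule hom_compose)
  have left: "Phibar n (\<psi> c) = c" if c: "c \<in> carrier ?FA" for c
  proof -
    have kc: "Poly_Mapping.keys c \<subseteq> chi_index n" using c by simp
    show ?thesis
    proof (rule free_Abelian_group_induct[where P = "\<lambda>c. Phibar n (\<psi> c) = c", OF kc])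
      have "\<psi> 0 = DD n" using PsiH.hom_one by simp
      also have "\<dots> = DD n #>\<^bsub>hPSigma n\<^esub> \<one>\<^bsub>hPSigma n\<^esub>" using DN.subset by simp
      finally show "Phibar n (\<psi> 0) = 0" by (simp add: Phibar_coset)
    next
      fix x y :: "nat \<times> nat \<Rightarrow>\<^sub>0 int"
      assume xy: "Poly_Mapping.keys x \<subseteq> chi_index n" "Poly_Mapping.keys y \<subseteq> chi_index n"
        "Phibar n (\<psi> x) = x" "Phibar n (\<psi> y) = y"
      then show "Phibar n (\<psi> (x - y)) = x - y" using hom_frag_diff[OF comp xy(1,2)] by simp
    next
      fix a assume a: "a \<in> chi_index n"
      then show "Phibar n (\<psi> (frag_of a)) = frag_of a"
        using chiC[OF a] by (cases a) (simp add: pf f_def Phibar_coset Phi_chi)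
    qed
  qed
  have inj: "inj_on \<psi> (carrier ?FA)"
    by (rule inj_on_inverseI[of _ "Phibar n"]) (rule left)
  have surj: "\<psi> ` carrier ?FA = carrier ?Ab"
  proof
    show "\<psi> ` carrier ?FA \<subseteq> carrier ?Ab" using psi by (auto simp: hom_def)
    have "x \<in> generate (hPSigma n) (chis n) \<Longrightarrow> DD n #>\<^bsub>hPSigma n\<^esub> x \<in> \<psi> ` carrier ?FA" for x
    proof (induct rule: generate.induct)
      case one
      have "DD n #>\<^bsub>hPSigma n\<^esub> \<one>\<^bsub>hPSigma n\<^esub> = \<psi> 0" using DN.subset PsiH.hom_one by simp
      moreover have "(0::nat \<times> nat \<Rightarrow>\<^sub>0 int) \<in> carrier ?FA" by simp
      ultimately show ?case by blast
    next
      case (incl h)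
      then obtain a where a: "a \<in> chi_index n" "h = chi n (fst a) (snd a)" by auto
      then show ?case using pf[OF a(1)] by (intro image_eqI[of _ _ "frag_of a"]) (auto simp: f_def)
    next
      case (inv h)
      then obtain a where a: "a \<in> chi_index n" "h = chi n (fst a) (snd a)" by auto
      have hc: "h \<in> carrier (hPSigma n)" using a chiC by simp
      have "DD n #>\<^bsub>hPSigma n\<^esub> inv\<^bsub>hPSigma n\<^esub> h = inv\<^bsub>?Ab\<^esub> (DD n #>\<^bsub>hPSigma n\<^esub> h)"
        using hc by (simp add: DN.inv_FactGroup DN.rcos_inv carrier_FactGroup)
      also have "\<dots> = inv\<^bsub>?Ab\<^esub> (\<psi> (frag_of a))" using pf[OF a(1)] a by (simp add: f_def)
      also have "\<dots> = \<psi> (inv\<^bsub>?FA\<^esub> (frag_of a))" using a PsiH.hom_inv[of "frag_of a"] by simp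
      finally show ?case using a by (intro image_eqI) auto
    next
      case (eng h1 h2)
      then obtain c1 c2 where c: "c1 \<in> carrier ?FA" "DD n #>\<^bsub>hPSigma n\<^esub> h1 = \<psi> c1"
         "c2 \<in> carrier ?FA" "DD n #>\<^bsub>hPSigma n\<^esub> h2 = \<psi> c2" by auto
      have h: "h1 \<in> carrier (hPSigma n)" "h2 \<in> carrier (hPSigma n)"
        using eng(1,3) part1[of n] by auto
      have cc: "c1 \<otimes>\<^bsub>?FA\<^esub> c2 \<in> carrier ?FA"
        using c(1,3) by (rule monoid.m_closed[OF group.is_monoid[OF group_free_Abelian_group]])
      have "DD n #>\<^bsub>hPSigma n\<^esub> (h1 \<otimes>\<^bsub>hPSigma n\<^esub> h2) = \<psi> c1 \<otimes>\<^bsub>?Ab\<^esub> \<psi> c2"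
        using h c DN.rcos_sum[OF h] by simp
      also have "\<dots> = \<psi> (c1 \<otimes>\<^bsub>?FA\<^esub> c2)" using PsiH.hom_mult[OF c(1) c(3)] by simp
      finally show ?case using cc by (rule image_eqI)
    qed
    then show "carrier ?Ab \<subseteq> \<psi> ` carrier ?FA"
      using part1[of n] by (auto simp: carrier_FactGroup)
  qed
  show ?thesis
  proof (intro exI conjI)
    show "\<psi> \<in> iso ?FA (abelianization (hPSigma n))"
      using psi inj surj by (simp add: iso_def bij_betw_def abelianization_def)
    show "\<forall>(i, j) \<in> chi_index n. \<psi> (frag_of (i, j)) = DD n #>\<^bsub>hPSigma n\<^esub> chi n i j"
      using pf by (auto simp: f_def)
  qed
qed


theorem corollary3p10:
  fixes n :: nat
  assumes "n \<ge> 2"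
  shows "carrier (hPSigma n) = generate (hPSigma n) ((\<lambda>(i, j). chi n i j) ` chi_index n)
       \<and> (\<exists>\<psi>. \<psi> \<in> iso (free_Abelian_group (chi_index n)) (abelianization (hPSigma n))
              \<and> (\<forall>(i, j) \<in> chi_index n.
                   \<psi> (frag_of (i, j)) = derived (hPSigma n) (carrier (hPSigma n)) #>\<^bsub>hPSigma n\<^esub> chi n i j))"
  using part1[of n] part2[of n] by blast

end
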